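(* For every coloring $c:S^1\to\{R,B\}$ there exists a distinguishing coloring $c^*:S^1\to\{R,B\}$ such that $c(x)\neq c^*(x)$ for at most three points $x\in S^1$.
   Context: The group $O(2)$ of isometries of the unit circle $S^1$ (rotations and reflections) acts on $S^1$. A coloring $c:S^1\to\{R,B\}$ is distinguishing if no non-identity $\gamma\in O(2)$ satisfies $c\circ\gamma=c$. *)

theory Defs
  imports "HOL-Analysis.Analysis"
begin

datatype color = R | B

abbreviation S1 :: "complex set" where "S1 \<equiv> sphere 0 1"

definition O2 :: "(complex \<Rightarrow> complex) set" where
  "O2 = {g. \<exists>a. norm a = 1 \<and> (g = (\<lambda>z. a * z) \<or> g = (\<lambda>z. a * cnj z))}"

text \<open>A coloring c : S^1 \<rightarrow> {R,B} (only values on S^1 matter) is distinguishing if no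
  element of O(2) acting non-trivially on S^1 preserves it.\<close>
definition distinguishing :: "(complex \<Rightarrow> color) \<Rightarrow> bool" where
  "distinguishing c \<longleftrightarrow>
     (\<forall>g\<in>O2. (\<forall>x\<in>S1. c (g x) = c x) \<longrightarrow> (\<forall>x\<in>S1. g x = x))"

end

theory Submission
  imports Defs
begin


lemma S1_uncountable: "uncountable S1"
proof
  assume c: "countable S1"
  have "{-1..1::real} \<subseteq> Re ` S1"
  proof
    fix t :: real assume t: "t \<in> {-1..1}"
    let ?z = "Complex t (sqrt (1 - t^2))"
    have "\<bar>t\<bar> \<le> 1" using t by auto
    then have "t^2 \<le> 1" by (simp add: abs_square_le_1)
    then have "cmod ?z = 1" by (simp add: cmod_def)
    then show "t \<in> Re ` S1" by (intro image_eqI[of _ _ ?z]) auto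
  qed
  moreover have "countable (Re ` S1)" using c by simp
  ultimately have "countable {-1..1::real}" using countable_subset by blast
  then show False using uncountable_closed_interval[of "-1" "1::real"] by simp
qed

lemma level_finite:
  fixes q :: complex and t :: real
  assumes "q \<noteq> 0"
  shows "finite {w\<in>S1. Re (q * w) = t}"
proof -
  let ?s = "t / cmod q"
  let ?V = "{Complex ?s (sqrt (1 - ?s^2)), Complex ?s (- sqrt (1 - ?s^2))}"
  have "{w\<in>S1. Re (q * w) = t} \<subseteq> (\<lambda>v. v * of_real (cmod q) / q) ` ?V"
  proof
    fix w assume w: "w \<in> {w\<in>S1. Re (q * w) = t}"
    define v where "v = q * w / of_real (cmod q)"
    have nq: "cmod q > 0" using assms by simp
    have nv: "cmod v = 1" using w nq by (simp add: v_def norm_mult norm_divide)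
    have rv: "Re v = ?s" using w by (simp add: v_def)
    have "(Re v)^2 + (Im v)^2 = 1" using nv by (simp add: cmod_def)
    then have "(Im v)^2 = 1 - ?s^2" using rv by simp
    then have "sqrt (1 - ?s^2) = \<bar>Im v\<bar>" by (metis real_sqrt_abs)
    then have "Im v = sqrt (1 - ?s^2) \<or> Im v = - sqrt (1 - ?s^2)" by linarith
    then have "v \<in> ?V" using rv by (auto simp: complex_eq_iff)
    moreover have "w = v * of_real (cmod q) / q" using nq assms by (simp add: v_def)
    ultimately show "w \<in> (\<lambda>v. v * of_real (cmod q) / q) ` ?V" by blast
  qed
  then show ?thesis by (rule finite_subset) simp
qed

lemma dist_sq_S1:
  fixes x w :: complex
  assumes "cmod x = 1" "cmod w = 1"
  shows "(cmod (x - w))^2 = 2 - 2 * Re (cnj x * w)"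
proof -
  have "(cmod (x - w))^2 = (Re x - Re w)^2 + (Im x - Im w)^2" by (simp add: cmod_def)
  moreover have "(Re x)^2 + (Im x)^2 = 1" "(Re w)^2 + (Im w)^2 = 1"
    using assms by (simp_all add: cmod_def)
  ultimately show ?thesis by (simp add: power2_eq_square algebra_simps)
qed

lemma sphere_finite:
  assumes "x \<in> S1"
  shows "finite {w\<in>S1. cmod (x - w) = r}"
proof -
  have "{w\<in>S1. cmod (x - w) = r} \<subseteq> {w\<in>S1. Re (cnj x * w) = (2 - r^2)/2}"
    using assms dist_sq_S1[of x] by auto
  moreover have "cnj x \<noteq> 0" using assms by auto
  ultimately show ?thesis using level_finite finite_subset by blast
qed

lemma bisector_finite:
  assumes "x \<in> S1" "u \<in> S1" "x \<noteq> u"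
  shows "finite {w\<in>S1. cmod (w - u) = cmod (x - w)}"
proof -
  have "{w\<in>S1. cmod (w - u) = cmod (x - w)} \<subseteq> {w\<in>S1. Re ((cnj x - cnj u) * w) = 0}"
  proof safe
    fix w assume w: "w \<in> S1" "cmod (w - u) = cmod (x - w)"
    have "(cmod (u - w))^2 = (cmod (x - w))^2" using w by (simp add: norm_minus_commute)
    then show "Re ((cnj x - cnj u) * w) = 0" using dist_sq_S1[of x w] dist_sq_S1[of u w] assms w
      by (simp add: algebra_simps)
  qed
  moreover have "cnj x - cnj u \<noteq> 0" using assms by auto
  ultimately show ?thesis using level_finite finite_subset by blast
qed




lemma unit_cnj: "cmod z = 1 \<Longrightarrow> z * cnj z = 1"
  using complex_norm_square[of z] by simp

lemma O2_cases:
  assumes "g \<in> O2"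
  obtains a where "cmod a = 1" "g = (\<lambda>z. a * z)"
        | a where "cmod a = 1" "g = (\<lambda>z. a * cnj z)"
  using assms unfolding O2_def by auto

lemma O2_S1: "g \<in> O2 \<Longrightarrow> z \<in> S1 \<Longrightarrow> g z \<in> S1"
  by (erule O2_cases) (auto simp: norm_mult)

lemma O2_inj: "g \<in> O2 \<Longrightarrow> inj g"
  by (erule O2_cases) (auto simp: inj_def)

lemma O2_norm: "g \<in> O2 \<Longrightarrow> cmod (g u - g v) = cmod (u - v)"
proof (erule O2_cases)
  fix a assume "cmod a = 1" "g = (\<lambda>z. a * z)"
  then show ?thesis by (simp add: norm_mult flip: right_diff_distrib)
next
  fix a assume "cmod a = 1" "g = (\<lambda>z. a * cnj z)"
  then have "g u - g v = a * cnj (u - v)" by (simp add: algebra_simps)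
  then have "cmod (g u - g v) = cmod (cnj (u - v))" using \<open>cmod a = 1\<close>
    by (simp add: norm_mult del: complex_cnj_diff)
  then show ?thesis by (metis complex_mod_cnj)
qed

lemma O2_fix2:
  assumes g: "g \<in> O2" and x: "x \<in> S1" and y: "y \<in> S1" and "y \<noteq> x" "y \<noteq> - x"
    and gx: "g x = x" and gy: "g y = y"
  shows "g w = w"
  using g
proof (cases rule: O2_cases)
  case (1 a)
  have "x \<noteq> 0" using x by auto
  then have "a = 1" using gx 1 by simp
  then show ?thesis using 1 by simp
next
  case (2 a)
  have "a = a * (x * cnj x)" using unit_cnj[of x] x by simp
  also have "\<dots> = (a * cnj x) * x" by (simp add: algebra_simps)
  also have "\<dots> = x * x" using gx 2 by simp
  finally have ax: "a = x * x" .
  have "a = a * (y * cnj y)" using unit_cnj[of y] y by simp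
  also have "\<dots> = (a * cnj y) * y" by (simp add: algebra_simps)
  also have "\<dots> = y * y" using gy 2 by simp
  finally have ay: "a = y * y" .
  have "(x - y) * (x + y) = 0" using ax ay by (simp add: algebra_simps)
  then have False using assms(4,5) by (auto simp: eq_neg_iff_add_eq_0 add.commute)
  then show ?thesis ..
qed

definition uniq :: "complex set \<Rightarrow> complex \<Rightarrow> complex \<Rightarrow> bool" where
  "uniq X p q \<longleftrightarrow> (\<forall>u\<in>X. \<forall>v\<in>X. u \<noteq> v \<longrightarrow> cmod (u - v) = cmod (p - q) \<longrightarrow>
      (u = p \<and> v = q) \<or> (u = q \<and> v = p))"

lemma uniq_map:
  assumes g: "g \<in> O2" and X: "\<forall>w\<in>X. g w \<in> X" and p: "p \<in> X" and q: "q \<in> X" and "p \<noteq> q"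
    and "uniq X p q"
  shows "(g p = p \<and> g q = q) \<or> (g p = q \<and> g q = p)"
proof -
  have "g p \<noteq> g q" using O2_inj[OF g] \<open>p \<noteq> q\<close> by (auto simp: inj_def)
  moreover have "cmod (g p - g q) = cmod (p - q)" using O2_norm[OF g] .
  ultimately show ?thesis using assms unfolding uniq_def by blast
qed

lemma rigid:
  assumes g: "g \<in> O2" and X: "\<forall>w\<in>X. g w \<in> X" and XS: "X \<subseteq> S1"
    and xyz: "x \<in> X" "y \<in> X" "z \<in> X" "x \<noteq> y" "y \<noteq> z" "x \<noteq> z" "y \<noteq> - x"
    and u1: "uniq X x y" and u2: "uniq X y z" and u3: "uniq X x z"
  shows "g w = w"
proof -
  have a: "(g x = x \<and> g y = y) \<or> (g x = y \<and> g y = x)" by (rule uniq_map[OF g X]) (use assms in auto)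
  have b: "(g y = y \<and> g z = z) \<or> (g y = z \<and> g z = y)" by (rule uniq_map[OF g X]) (use assms in auto)
  have "g x = x" "g y = y" using a b xyz by auto
  moreover have "x \<in> S1" "y \<in> S1" using xyz XS by auto
  ultimately show ?thesis using O2_fix2[OF g, of x y w] xyz by auto
qed




lemma pick_S1: "countable Bs \<Longrightarrow> \<exists>w\<in>S1. w \<notin> Bs"
  using uncountable_minus_countable[OF S1_uncountable] by (metis Diff_iff countable_empty ex_in_conv)

definition Dl :: "complex set \<Rightarrow> real set" where
  "Dl S = (\<lambda>(u,v). cmod (u - v)) ` (S \<times> S)"

lemma Dl_finite: "finite S \<Longrightarrow> finite (Dl S)"
  unfolding Dl_def by simp

lemma Dl_mem: "u \<in> S \<Longrightarrow> v \<in> S \<Longrightarrow> cmod (u - v) \<in> Dl S"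
  unfolding Dl_def by force

lemma countable_dist_set:
  assumes "x \<in> S1" "finite Rs"
  shows "countable (\<Union>d\<in>Rs. {w\<in>S1. cmod (x - w) = d})"
  using assms sphere_finite by (intro countable_UN countable_finite) auto

lemma choose3:
  assumes P: "countable P" and D: "finite D" "D \<subseteq> S1"
  shows "\<exists>x y z. x \<in> S1 \<and> y \<in> S1 \<and> z \<in> S1 \<and> x \<notin> P \<and> y \<notin> P \<and> z \<notin> P \<and>
     x \<notin> D \<and> y \<notin> D \<and> z \<notin> D \<and> x \<noteq> y \<and> y \<noteq> z \<and> x \<noteq> z \<and> y \<noteq> - x \<and>
     uniq (D \<union> {x,y,z}) x y \<and> uniq (D \<union> {x,y,z}) y z \<and> uniq (D \<union> {x,y,z}) x z"
proof -
  obtain x where x: "x \<in> S1" "x \<notin> P \<union> D"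
    using pick_S1[of "P \<union> D"] P D by (auto simp: countable_finite)
  define Y1 where "Y1 = (\<Union>d\<in>Dl (insert x D). {w\<in>S1. cmod (x - w) = d})"
  define Y2 where "Y2 = (\<Union>u\<in>D. {w\<in>S1. cmod (w - u) = cmod (x - w)})"
  have "countable Y1" unfolding Y1_def using x D by (intro countable_dist_set Dl_finite) auto
  moreover have "countable Y2" unfolding Y2_def using x D
    by (intro countable_UN countable_finite bisector_finite) auto
  ultimately have "countable (P \<union> D \<union> {x, -x} \<union> Y1 \<union> Y2)" using P D by (auto simp: countable_finite)
  then obtain y where y: "y \<in> S1" "y \<notin> P \<union> D \<union> {x, -x} \<union> Y1 \<union> Y2" using pick_S1 by blast
  have y1: "\<forall>u\<in>insert x D. \<forall>v\<in>insert x D. cmod (u - v) \<noteq> cmod (x - y)"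
    using y Dl_mem[of _ "insert x D"] unfolding Y1_def by fastforce
  have y2: "\<forall>u\<in>D. cmod (y - u) \<noteq> cmod (x - y)"
    using y unfolding Y2_def by fastforce
  define X1 where "X1 = insert x (insert y D)"
  have fX1: "finite X1" using D by (simp add: X1_def)
  define Z1 where "Z1 = (\<Union>d\<in>Dl X1. {w\<in>S1. cmod (x - w) = d})"
  define Z2 where "Z2 = (\<Union>d\<in>Dl X1. {w\<in>S1. cmod (y - w) = d})"
  define Z3 where "Z3 = {w\<in>S1. cmod (w - y) = cmod (x - w)}"
  define Z4 where "Z4 = (\<Union>u\<in>D. {w\<in>S1. cmod (w - u) = cmod (x - w)})"
  define Z5 where "Z5 = (\<Union>u\<in>D. {w\<in>S1. cmod (w - u) = cmod (y - w)})"
  define Z6 where "Z6 = (\<Union>u\<in>D. {w\<in>S1. cmod (u - w) = cmod (x - y)})"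
  have "x \<noteq> y" using y by auto
  have "countable Z1" unfolding Z1_def using x fX1 by (intro countable_dist_set Dl_finite) auto
  moreover have "countable Z2" unfolding Z2_def using y fX1 by (intro countable_dist_set Dl_finite) auto
  moreover have "countable Z3" unfolding Z3_def using x y \<open>x \<noteq> y\<close>
    by (intro countable_finite bisector_finite) auto
  moreover have "countable Z4" unfolding Z4_def using x D
    by (intro countable_UN countable_finite bisector_finite) auto
  moreover have "countable Z5" unfolding Z5_def using y D
    by (intro countable_UN countable_finite bisector_finite) auto
  moreover have "countable Z6" unfolding Z6_def using D
    by (intro countable_UN countable_finite sphere_finite) auto
  ultimately have "countable (P \<union> D \<union> {x, y} \<union> Z1 \<union> Z2 \<union> Z3 \<union> Z4 \<union> Z5 \<union> Z6)"
    using P D by (auto simp: countable_finite)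
  then obtain z where z: "z \<in> S1" "z \<notin> P \<union> D \<union> {x, y} \<union> Z1 \<union> Z2 \<union> Z3 \<union> Z4 \<union> Z5 \<union> Z6"
    using pick_S1 by blast
  have z1: "\<forall>u\<in>X1. \<forall>v\<in>X1. cmod (u - v) \<noteq> cmod (x - z)"
    using z Dl_mem[of _ X1] unfolding Z1_def by fastforce
  have z2: "\<forall>u\<in>X1. \<forall>v\<in>X1. cmod (u - v) \<noteq> cmod (y - z)"
    using z Dl_mem[of _ X1] unfolding Z2_def by fastforce
  have z3: "cmod (z - y) \<noteq> cmod (x - z)" using z unfolding Z3_def by auto
  have z4: "\<forall>u\<in>D. cmod (z - u) \<noteq> cmod (x - z)" using z unfolding Z4_def by fastforce
  have z5: "\<forall>u\<in>D. cmod (z - u) \<noteq> cmod (y - z)" using z unfolding Z5_def by fastforce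
  have z6: "\<forall>u\<in>D. cmod (u - z) \<noteq> cmod (x - y)" using z unfolding Z6_def by fastforce
  note nc = norm_minus_commute
  have "uniq (D \<union> {x,y,z}) x y"
    unfolding uniq_def
  proof (intro ballI impI)
    fix u v assume uv: "u \<in> D \<union> {x,y,z}" "v \<in> D \<union> {x,y,z}" "u \<noteq> v" "cmod (u - v) = cmod (x - y)"
    show "u = x \<and> v = y \<or> u = y \<and> v = x"
      using uv y1 y2 z1 z2 z3 z4 z5 z6 nc[of u v] nc[of x z] nc[of y z] nc[of z y] nc[of x y]
      unfolding X1_def by (metis UnE insert_iff singletonD)
  qed
  moreover have "uniq (D \<union> {x,y,z}) y z"
    unfolding uniq_def
  proof (intro ballI impI)
    fix u v assume uv: "u \<in> D \<union> {x,y,z}" "v \<in> D \<union> {x,y,z}" "u \<noteq> v" "cmod (u - v) = cmod (y - z)"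
    show "u = y \<and> v = z \<or> u = z \<and> v = y"
      using uv y1 y2 z1 z2 z3 z4 z5 z6 nc[of u v] nc[of x z] nc[of y z] nc[of z y] nc[of x y]
      unfolding X1_def by (metis UnE insert_iff singletonD)
  qed
  moreover have "uniq (D \<union> {x,y,z}) x z"
    unfolding uniq_def
  proof (intro ballI impI)
    fix u v assume uv: "u \<in> D \<union> {x,y,z}" "v \<in> D \<union> {x,y,z}" "u \<noteq> v" "cmod (u - v) = cmod (x - z)"
    show "u = x \<and> v = z \<or> u = z \<and> v = x"
      using uv y1 y2 z1 z2 z3 z4 z5 z6 nc[of u v] nc[of x z] nc[of y z] nc[of z y] nc[of x y]
      unfolding X1_def by (metis UnE insert_iff singletonD)
  qed
  ultimately show ?thesis using x y z by blast
qed




definition Ec :: "(complex \<Rightarrow> color) \<Rightarrow> (complex \<Rightarrow> complex) \<Rightarrow> complex set" where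
  "Ec c g = {y\<in>S1. c (g y) \<noteq> c y}"

fun flipc :: "color \<Rightarrow> color" where
  "flipc R = B" | "flipc B = R"

definition modc :: "(complex \<Rightarrow> color) \<Rightarrow> complex set \<Rightarrow> complex \<Rightarrow> color" where
  "modc c F = (\<lambda>z. if z \<in> F then flipc (c z) else c z)"

lemma flipc_neq: "flipc v \<noteq> v"
  by (cases v) auto

lemma modc_diff: assumes "F \<subseteq> S1" shows "{x\<in>S1. c x \<noteq> modc c F x} = F"
proof -
  have "\<And>v. v \<noteq> flipc v" by (metis flipc_neq)
  then show ?thesis unfolding modc_def using flipc_neq assms by auto
qed

lemma sym_E:
  assumes "\<forall>x\<in>S1. modc c F (g x) = modc c F x" "y \<in> S1"
  shows "y \<in> Ec c g \<longleftrightarrow> ((g y \<in> F) \<noteq> (y \<in> F))"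
proof -
  have "modc c F (g y) = modc c F y" using assms by auto
  then show ?thesis using assms(2) unfolding Ec_def modc_def
    by (cases "c y"; cases "c (g y)") (auto split: if_splits)
qed

lemma sym_finite:
  assumes g: "g \<in> O2" and s: "\<forall>x\<in>S1. modc c F (g x) = modc c F x" and F: "finite F"
  shows "finite (Ec c g)"
proof -
  have "Ec c g \<subseteq> F \<union> g -` F" using sym_E[OF s] by (auto simp: Ec_def)
  moreover have "finite (g -` F)" using F O2_inj[OF g] by (simp add: finite_vimageI)
  ultimately show ?thesis using F finite_subset by blast
qed

lemma finish:
  assumes xyz: "x \<in> S1" "y \<in> S1" "z \<in> S1" "x \<notin> D" "y \<notin> D" "z \<notin> D"
      "x \<noteq> y" "y \<noteq> z" "x \<noteq> z" "y \<noteq> - x"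
    and u: "uniq (D \<union> {x,y,z}) x y" "uniq (D \<union> {x,y,z}) y z" "uniq (D \<union> {x,y,z}) x z"
    and D: "D \<subseteq> S1"
    and inv: "\<And>g. g \<in> O2 \<Longrightarrow> \<forall>w\<in>S1. modc c {x,y,z} (g w) = modc c {x,y,z} w \<Longrightarrow>
               \<forall>w\<in>S1. (g w \<in> D \<union> {x,y,z}) = (w \<in> D \<union> {x,y,z})"
  shows "\<exists>c'. distinguishing c' \<and> finite {w\<in>S1. c w \<noteq> c' w} \<and> card {w\<in>S1. c w \<noteq> c' w} \<le> 3"
proof (intro exI conjI)
  let ?F = "{x,y,z}"
  have FS: "?F \<subseteq> S1" using xyz by auto
  show "finite {w\<in>S1. c w \<noteq> modc c ?F w}" using modc_diff[OF FS] by simp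
  show "card {w\<in>S1. c w \<noteq> modc c ?F w} \<le> 3" using modc_diff[OF FS] by (simp add: card_insert_le_m1)
  show "distinguishing (modc c ?F)"
    unfolding distinguishing_def
  proof (intro ballI impI)
    fix g w assume g: "g \<in> O2" and s: "\<forall>x\<in>S1. modc c ?F (g x) = modc c ?F x" and w: "w \<in> S1"
    have X: "\<forall>v\<in>D \<union> ?F. g v \<in> D \<union> ?F" using inv[OF g s] D FS by blast
    show "g w = w"
      by (rule rigid[OF g X _ _ _ _ _ _ _ _ u]) (use xyz D in auto)
  qed
qed

definition Hrot :: "(complex \<Rightarrow> color) \<Rightarrow> complex set" where
  "Hrot c = {a. cmod a = 1 \<and> finite (Ec c (\<lambda>z. a * z))}"
definition Hrefl :: "(complex \<Rightarrow> color) \<Rightarrow> complex set" where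
  "Hrefl c = {a. cmod a = 1 \<and> finite (Ec c (\<lambda>z. a * cnj z))}"

lemma sym_in_H:
  assumes g: "g \<in> O2" and s: "\<forall>x\<in>S1. modc c F (g x) = modc c F x" and F: "finite F"
  obtains a where "a \<in> Hrot c" "g = (\<lambda>z. a * z)" | a where "a \<in> Hrefl c" "g = (\<lambda>z. a * cnj z)"
  using g sym_finite[OF g s F] by (cases rule: O2_cases) (auto simp: Hrot_def Hrefl_def)

lemma case1:
  assumes "countable (Hrot c)" "countable (Hrefl c)"
  shows "\<exists>c'. distinguishing c' \<and> finite {w\<in>S1. c w \<noteq> c' w} \<and> card {w\<in>S1. c w \<noteq> c' w} \<le> 3"
proof -
  define P1 where "P1 = (\<Union>a\<in>Hrot c. Ec c (\<lambda>z. a * z) \<union> (\<lambda>z. a * z) ` Ec c (\<lambda>z. a * z))"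
  define P2 where "P2 = (\<Union>a\<in>Hrefl c. Ec c (\<lambda>z. a * cnj z) \<union> (\<lambda>z. a * cnj z) ` Ec c (\<lambda>z. a * cnj z))"
  have "countable P1" unfolding P1_def
    by (intro countable_UN[OF assms(1)] countable_finite) (auto simp: Hrot_def)
  moreover have "countable P2" unfolding P2_def
    by (intro countable_UN[OF assms(2)] countable_finite) (auto simp: Hrefl_def)
  ultimately have cP: "countable (P1 \<union> P2)" by simp
  obtain x y z where H: "x \<in> S1 \<and> y \<in> S1 \<and> z \<in> S1 \<and> x \<notin> P1 \<union> P2 \<and> y \<notin> P1 \<union> P2 \<and> z \<notin> P1 \<union> P2 \<and>
     x \<notin> {} \<and> y \<notin> {} \<and> z \<notin> {} \<and> x \<noteq> y \<and> y \<noteq> z \<and> x \<noteq> z \<and> y \<noteq> - x \<and>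
     uniq ({} \<union> {x,y,z}) x y \<and> uniq ({} \<union> {x,y,z}) y z \<and> uniq ({} \<union> {x,y,z}) x z"
    using choose3[OF cP finite.emptyI empty_subsetI] by (elim exE) (rule that)
  have xyz: "x \<in> S1" "y \<in> S1" "z \<in> S1" "x \<notin> P1 \<union> P2" "y \<notin> P1 \<union> P2" "z \<notin> P1 \<union> P2"
     "x \<noteq> y" "y \<noteq> z" "x \<noteq> z" "y \<noteq> - x"
     "uniq ({} \<union> {x,y,z}) x y" "uniq ({} \<union> {x,y,z}) y z" "uniq ({} \<union> {x,y,z}) x z"
    using H by blast+
  show ?thesis
  proof (rule finish[of x y z "{}", OF xyz(1,2,3) _ _ _ xyz(7-13)])
    fix g assume g: "g \<in> O2" and s: "\<forall>w\<in>S1. modc c {x,y,z} (g w) = modc c {x,y,z} w"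
    show "\<forall>w\<in>S1. (g w \<in> {} \<union> {x,y,z}) = (w \<in> {} \<union> {x,y,z})"
    proof (intro ballI, rule ccontr)
      fix w assume w: "w \<in> S1" and ne: "(g w \<in> {} \<union> {x,y,z}) \<noteq> (w \<in> {} \<union> {x,y,z})"
      have finite_fin: "finite {x,y,z}" by simp
      have ne': "(g w \<in> {x,y,z}) \<noteq> (w \<in> {x,y,z})" using ne by (metis Un_empty_left)
      have wE: "w \<in> Ec c g" using sym_E[OF s w] ne' by blast
      have "w \<in> P1 \<union> P2 \<and> g w \<in> P1 \<union> P2"
      proof (rule sym_in_H[OF g s finite_fin])
        fix a assume 1: "a \<in> Hrot c" "g = (\<lambda>z. a * z)"
        have e: "w \<in> Ec c (\<lambda>z. a * z)" using wE 1 by simp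
        have "g w \<in> (\<lambda>z. a * z) ` Ec c (\<lambda>z. a * z)" unfolding 1(2) using e by (rule imageI)
        then have "g w \<in> P1" unfolding P1_def by (intro UN_I[OF 1(1)] UnI2)
        moreover have "w \<in> P1" unfolding P1_def using e by (intro UN_I[OF 1(1)] UnI1)
        ultimately show ?thesis by blast
      next
        fix a assume 2: "a \<in> Hrefl c" "g = (\<lambda>z. a * cnj z)"
        have e: "w \<in> Ec c (\<lambda>z. a * cnj z)" using wE 2 by simp
        have "g w \<in> (\<lambda>z. a * cnj z) ` Ec c (\<lambda>z. a * cnj z)" unfolding 2(2) using e by (rule imageI)
        then have "g w \<in> P2" unfolding P2_def by (intro UN_I[OF 2(1)] UnI2)
        moreover have "w \<in> P2" unfolding P2_def using e by (intro UN_I[OF 2(1)] UnI1)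
        ultimately show ?thesis by blast
      qed
      then have "w \<notin> {x,y,z}" "g w \<notin> {x,y,z}" using xyz(4,5,6) by blast+
      then show False using ne' by blast
    qed
  qed simp_all
qed






lemma Hrefl_comp:
  assumes a0: "a0 \<in> Hrefl c" and a: "a \<in> Hrefl c"
  shows "a0 * cnj a \<in> Hrot c"
proof -
  have n: "cmod (a0 * cnj a) = 1" using a0 a by (simp add: Hrefl_def norm_mult)
  have f0: "finite (Ec c (\<lambda>z. a0 * cnj z))" and f1: "finite (Ec c (\<lambda>z. a * cnj z))"
    using a0 a by (auto simp: Hrefl_def)
  have inj: "inj (\<lambda>z. a * cnj z)" using a by (auto simp: Hrefl_def inj_def)
  have "Ec c (\<lambda>z. a0 * cnj a * z) \<subseteq> Ec c (\<lambda>z. a * cnj z) \<union> (\<lambda>z. a * cnj z) -` Ec c (\<lambda>z. a0 * cnj z)"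
  proof
    fix y assume y: "y \<in> Ec c (\<lambda>z. a0 * cnj a * z)"
    have yS: "y \<in> S1" using y by (simp add: Ec_def)
    have aS: "a * cnj y \<in> S1" using yS a by (simp add: Hrefl_def norm_mult)
    have eq: "a0 * cnj (a * cnj y) = a0 * cnj a * y" by simp
    show "y \<in> Ec c (\<lambda>z. a * cnj z) \<union> (\<lambda>z. a * cnj z) -` Ec c (\<lambda>z. a0 * cnj z)"
      using y yS aS eq unfolding Ec_def by (auto simp: mult.assoc)
  qed
  moreover have "finite ((\<lambda>z. a * cnj z) -` Ec c (\<lambda>z. a0 * cnj z))"
    using f0 inj by (simp add: finite_vimageI)
  ultimately have "finite (Ec c (\<lambda>z. a0 * cnj a * z))" using f1 finite_subset by blast
  then show ?thesis using n by (simp add: Hrot_def)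
qed

lemma Hrot_uncountable:
  assumes "\<not> (countable (Hrot c) \<and> countable (Hrefl c))"
  shows "uncountable (Hrot c)"
proof
  assume cr: "countable (Hrot c)"
  then have ur: "uncountable (Hrefl c)" using assms by blast
  then obtain a0 where a0: "a0 \<in> Hrefl c" by (metis countable_empty equals0I)
  have "(\<lambda>a. a0 * cnj a) ` Hrefl c \<subseteq> Hrot c" using Hrefl_comp[OF a0] by auto
  then have "countable ((\<lambda>a. a0 * cnj a) ` Hrefl c)" using cr countable_subset by blast
  moreover have "inj_on (\<lambda>a. a0 * cnj a) (Hrefl c)" using a0 by (auto simp: Hrefl_def inj_on_def)
  ultimately have "countable (Hrefl c)" by (rule countable_image_inj_on)
  then show False using ur by simp
qed



lemma indep_pair:
  assumes "uncountable H"
  shows "\<exists>a1\<in>H. \<exists>a2\<in>H. a1 \<noteq> 0 \<and> a2 \<noteq> 0 \<and>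
           (\<forall>m n. a1 powi m * a2 powi n = (1::complex) \<longrightarrow> m = 0 \<and> n = 0)"
proof -
  have cn: "countable ({0<..}::nat set)" by (rule countable_subset[OF subset_UNIV]) simp
  have ci: "countable (UNIV::int set)" by simp
  have c1: "countable ({0} \<union> (\<Union>n\<in>{0<..}. {z::complex. z ^ n = 1}))"
  proof -
    have "\<forall>n\<in>{0<..}. countable {z::complex. z ^ n = 1}"
      using finite_nth_roots countable_finite by auto
    then show ?thesis using countable_UN[OF cn] by auto
  qed
  obtain a1 where a1': "a1 \<in> H - ({0} \<union> (\<Union>n\<in>{0<..}. {z::complex. z ^ n = 1}))"
    using uncountable_minus_countable[OF assms c1] by (metis countable_empty ex_in_conv)
  then have a1: "a1 \<in> H" "a1 \<notin> {0} \<union> (\<Union>n\<in>{0<..}. {z::complex. z ^ n = 1})" by blast+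
  have c2: "countable ({0} \<union> (\<Union>n\<in>{0<..}. \<Union>m\<in>(UNIV::int set). {z::complex. z ^ n = a1 powi m}))"
  proof -
    have "\<forall>n\<in>{0<..}. \<forall>m. countable {z::complex. z ^ n = a1 powi m}"
      using finite_nth_roots countable_finite by auto
    then have "\<forall>n\<in>{0<..}. countable (\<Union>m\<in>(UNIV::int set). {z::complex. z ^ n = a1 powi m})"
      using countable_UN[OF ci] by blast
    then show ?thesis using countable_UN[OF cn] by auto
  qed
  obtain a2 where a2': "a2 \<in> H - ({0} \<union> (\<Union>n\<in>{0<..}. \<Union>m\<in>(UNIV::int set). {z::complex. z ^ n = a1 powi m}))"
    using uncountable_minus_countable[OF assms c2] by (metis countable_empty ex_in_conv)
  then have a2: "a2 \<in> H" "a2 \<notin> {0} \<union> (\<Union>n\<in>{0<..}. \<Union>m\<in>(UNIV::int set). {z::complex. z ^ n = a1 powi m})" by blast+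
  have n1: "\<And>n::nat. n > 0 \<Longrightarrow> a1 ^ n \<noteq> 1" using a1 by auto
  have n2: "\<And>(n::nat) m. n > 0 \<Longrightarrow> a2 ^ n \<noteq> a1 powi m" using a2 by auto
  have ne: "a1 \<noteq> 0" "a2 \<noteq> 0" using a1 a2 by auto
  have "\<forall>m n. a1 powi m * a2 powi n = 1 \<longrightarrow> m = 0 \<and> n = 0"
  proof (intro allI impI)
    fix m n :: int assume h: "a1 powi m * a2 powi n = 1"
    have "n = 0"
    proof (rule ccontr)
      assume "n \<noteq> 0"
      then consider "n > 0" | "n < 0" by linarith
      then show False
      proof cases
        case 1
        have "inverse (a1 powi m) = a2 powi n" using h by (rule inverse_unique)
        then have "a2 powi n = a1 powi (- m)" by (simp add: power_int_minus)
        moreover have "a2 powi n = a2 ^ nat n" using 1 by (simp add: power_int_def)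
        ultimately show False using n2[of "nat n" "-m"] 1 by simp
      next
        case 2
        have "a2 powi n * a1 powi m = 1" using h by (simp add: mult.commute)
        then have "inverse (a2 powi n) = a1 powi m" by (rule inverse_unique)
        then have "a2 powi (-n) = a1 powi m" by (simp add: power_int_minus)
        moreover have "a2 powi (-n) = a2 ^ nat (-n)" using 2 by (simp add: power_int_def)
        ultimately show False using n2[of "nat (-n)" m] 2 by simp
      qed
    qed
    moreover have "m = 0"
    proof (rule ccontr)
      assume "m \<noteq> 0"
      have h1: "a1 powi m = 1" using h \<open>n = 0\<close> by simp
      consider "m > 0" | "m < 0" using \<open>m \<noteq> 0\<close> by linarith
      then show False
      proof cases
        case 1
        have "a1 powi m = a1 ^ nat m" using 1 by (simp add: power_int_def)
        then show False using n1[of "nat m"] 1 h1 by simp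
      next
        case 2
        have "a1 powi (-m) = 1" using h1 by (simp add: power_int_minus)
        moreover have "a1 powi (-m) = a1 ^ nat (-m)" using 2 by (simp add: power_int_def)
        ultimately show False using n1[of "nat (-m)"] 2 by simp
      qed
    qed
    ultimately show "m = 0 \<and> n = 0" by simp
  qed
  then show ?thesis using a1 a2 ne by blast
qed



lemma int_const:
  fixes f :: "int \<Rightarrow> 'a"
  assumes "\<And>k. f (k + 1) = f k"
  shows "f a = f b"
proof -
  have "\<And>i. f i = f 0"
  proof -
    fix i :: int
    show "f i = f 0"
    proof (induct i rule: int_induct[where k = 0])
      case base then show ?case by simp
    next
      case (step1 i) then show ?case using assms[of i] by simp
    next
      case (step2 i) then show ?case using assms[of "i - 1"] by simp
    qed
  qed
  then show ?thesis by metis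
qed

lemma box_const:
  fixes beta :: "int \<Rightarrow> int \<Rightarrow> bool" and M :: int
  assumes s1: "\<And>m n. M < \<bar>m\<bar> \<or> M < \<bar>n\<bar> \<Longrightarrow> beta (m + 1) n = beta m n"
      and s2: "\<And>m n. M < \<bar>m\<bar> \<or> M < \<bar>n\<bar> \<Longrightarrow> beta m (n + 1) = beta m n"
  shows "M < \<bar>m\<bar> \<or> M < \<bar>n\<bar> \<Longrightarrow> beta m n = beta (M + 1) (M + 1)"
proof -
  have row: "\<And>n m m'. M < \<bar>n\<bar> \<Longrightarrow> beta m n = beta m' n"
  proof -
    fix n m m' assume "M < \<bar>n\<bar>"
    then show "beta m n = beta m' n" using int_const[of "\<lambda>k. beta k n"] s1 by blast
  qed
  have col: "\<And>m n n'. M < \<bar>m\<bar> \<Longrightarrow> beta m n = beta m n'"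
  proof -
    fix n m n' assume "M < \<bar>m\<bar>"
    then show "beta m n = beta m n'" using int_const[of "\<lambda>k. beta m k"] s2 by blast
  qed
  assume h: "M < \<bar>m\<bar> \<or> M < \<bar>n\<bar>"
  show ?thesis
  proof (cases "M < \<bar>n\<bar>")
    case True
    have "M < \<bar>M + 1\<bar> \<or> M + 1 < 0" by linarith
    then have "M < \<bar>M + 1\<bar>" by linarith
    then show ?thesis using row[OF True, of m "M+1"] col[of "M+1" n "M+1"] by simp
  next
    case False
    then have "M < \<bar>m\<bar>" using h by simp
    moreover have "M < \<bar>M + 1\<bar>" by (cases "M + 1 \<ge> 0") (use \<open>M < \<bar>m\<bar>\<close> in auto)
    ultimately show ?thesis using col[of m n "M+1"] row[of "M+1" m "M+1"] by simp
  qed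
qed






locale orb =
  fixes c :: "complex \<Rightarrow> color" and a1 a2 :: complex
  assumes a1H: "a1 \<in> Hrot c" and a2H: "a2 \<in> Hrot c"
    and indep: "\<forall>m n. a1 powi m * a2 powi n = 1 \<longrightarrow> m = 0 \<and> n = 0"
begin

definition phi :: "int \<Rightarrow> int \<Rightarrow> complex \<Rightarrow> complex" where
  "phi m n y = a1 powi m * a2 powi n * y"
definition Orb :: "complex \<Rightarrow> complex set" where
  "Orb y = {phi m n y | m n. True}"
definition Aset :: "complex set" where
  "Aset = {w. c w = R}"
definition U :: "complex set" where
  "U = {y\<in>S1. finite (Orb y - Aset)}"
definition Dd :: "complex set" where
  "Dd = {y\<in>S1. (c y = R) \<noteq> (y \<in> U)}"

lemma a1n: "cmod a1 = 1" and a2n: "cmod a2 = 1"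
  using a1H a2H by (auto simp: Hrot_def)
lemma a1nz: "a1 \<noteq> 0" and a2nz: "a2 \<noteq> 0"
  using a1n a2n by auto
lemma fE1: "finite (Ec c (\<lambda>z. a1 * z))" and fE2: "finite (Ec c (\<lambda>z. a2 * z))"
  using a1H a2H by (auto simp: Hrot_def)

lemma phi_norm: "cmod (phi m n y) = cmod y"
  by (simp add: phi_def norm_mult norm_power_int a1n a2n)

lemma phi_add: "phi m n (phi p q y) = phi (m + p) (n + q) y"
  by (simp add: phi_def power_int_add a1nz a2nz mult_ac)

lemma phi_0: "phi 0 0 y = y"
  by (simp add: phi_def)

lemma phi_succ1: "phi (m + 1) n y = a1 * phi m n y"
  by (simp add: phi_def power_int_add a1nz mult_ac)

lemma phi_succ2: "phi m (n + 1) y = a2 * phi m n y"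
  by (simp add: phi_def power_int_add a2nz mult_ac)

lemma phi_inj:
  assumes "y \<noteq> 0" "phi m n y = phi m' n' y"
  shows "m = m' \<and> n = n'"
proof -
  have e: "a1 powi m * a2 powi n = a1 powi m' * a2 powi n'" using assms by (simp add: phi_def)
  have "a1 powi (m - m') * a2 powi (n - n') = (a1 powi m * a2 powi n) / (a1 powi m' * a2 powi n')"
    by (simp add: power_int_diff a1nz a2nz)
  also have "\<dots> = 1" using e a1nz a2nz by simp
  finally show ?thesis using indep by force
qed

lemma orb_S1: "y \<in> S1 \<Longrightarrow> w \<in> Orb y \<Longrightarrow> w \<in> S1"
  by (auto simp: Orb_def phi_norm)

lemma orb_self: "y \<in> Orb y"
  unfolding Orb_def using phi_0 by (metis (mono_tags, lifting) mem_Collect_eq)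

lemma orb_eq:
  assumes "w \<in> Orb y" shows "Orb w = Orb y"
proof -
  obtain p q where w: "w = phi p q y" using assms by (auto simp: Orb_def)
  show ?thesis
  proof
    show "Orb w \<subseteq> Orb y" unfolding Orb_def w phi_add by blast
  next
    show "Orb y \<subseteq> Orb w"
    proof
      fix v assume "v \<in> Orb y"
      then obtain m n where v: "v = phi m n y" by (auto simp: Orb_def)
      have "v = phi (m - p) (n - q) w" unfolding v w phi_add by simp
      then show "v \<in> Orb w" by (auto simp: Orb_def)
    qed
  qed
qed

lemma orb_image: "Orb y = (\<lambda>(m, n). phi m n y) ` UNIV"
  by (auto simp: Orb_def)

lemma phi_inj2: "y \<noteq> 0 \<Longrightarrow> inj (\<lambda>(m, n). phi m n y)"
  by (auto simp: inj_def dest: phi_inj)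

lemma orb_inf: "y \<noteq> 0 \<Longrightarrow> infinite (Orb y)"
proof
  assume y: "y \<noteq> 0" and f: "finite (Orb y)"
  then have "finite (UNIV :: (int \<times> int) set)"
    using finite_imageD[of "\<lambda>(m, n). phi m n y" UNIV] phi_inj2[OF y] orb_image by (metis inj_on_subset subset_UNIV)
  then show False by (simp add: finite_prod)
qed

lemma cnj_powi: "cmod a = 1 \<Longrightarrow> cnj (a powi m) = a powi (- m)"
proof -
  assume "cmod a = 1"
  then have "cnj a = inverse a" using inverse_unique[OF unit_cnj[of a]] by simp
  then show ?thesis by (simp add: power_int_inverse power_int_minus)
qed

lemma rot_phi: "b * phi m n y = phi m n (b * y)"
  by (simp add: phi_def mult_ac)

lemma refl_phi: "b * cnj (phi m n y) = phi (- m) (- n) (b * cnj y)"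
  by (simp add: phi_def cnj_powi a1n a2n mult_ac del: complex_cnj_power_int)

lemma orb_map:
  assumes g: "g \<in> O2" shows "Orb (g y) = g ` Orb y"
  using g
proof (cases rule: O2_cases)
  case (1 b)
  show ?thesis
  proof
    show "Orb (g y) \<subseteq> g ` Orb y"
    proof
      fix v assume "v \<in> Orb (g y)"
      then obtain m n where v: "v = phi m n (g y)" by (auto simp: Orb_def)
      have "v = g (phi m n y)" using v 1 rot_phi by simp
      then show "v \<in> g ` Orb y" by (auto simp: Orb_def)
    qed
  next
    show "g ` Orb y \<subseteq> Orb (g y)"
    proof
      fix v assume "v \<in> g ` Orb y"
      then obtain m n where v: "v = g (phi m n y)" by (auto simp: Orb_def)
      have "v = phi m n (g y)" using v 1 rot_phi by simp
      then show "v \<in> Orb (g y)" by (auto simp: Orb_def)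
    qed
  qed
next
  case (2 b)
  show ?thesis
  proof
    show "Orb (g y) \<subseteq> g ` Orb y"
    proof
      fix v assume "v \<in> Orb (g y)"
      then obtain m n where v: "v = phi m n (g y)" by (auto simp: Orb_def)
      have "v = g (phi (- m) (- n) y)" using v 2 refl_phi[of b "- m" "- n" y] by simp
      then show "v \<in> g ` Orb y" by (auto simp: Orb_def)
    qed
  next
    show "g ` Orb y \<subseteq> Orb (g y)"
    proof
      fix v assume "v \<in> g ` Orb y"
      then obtain m n where v: "v = g (phi m n y)" by (auto simp: Orb_def)
      have "v = phi (- m) (- n) (g y)" using v 2 refl_phi by simp
      then show "v \<in> Orb (g y)" by (auto simp: Orb_def)
    qed
  qed
qed

end




context orb
begin

abbreviation "E12 \<equiv> Ec c (\<lambda>z. a1 * z) \<union> Ec c (\<lambda>z. a2 * z)"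

lemma box:
  assumes y: "y \<in> S1"
    and bound: "\<And>m n. phi m n y \<in> E12 \<Longrightarrow> \<bar>m\<bar> \<le> M \<and> \<bar>n\<bar> \<le> M"
  shows "M < \<bar>m\<bar> \<or> M < \<bar>n\<bar> \<Longrightarrow> (c (phi m n y) = R) = (c (phi (M + 1) (M + 1) y) = R)"
proof (rule box_const[where beta = "\<lambda>m n. c (phi m n y) = R"])
  fix m n assume h: "M < \<bar>m\<bar> \<or> M < \<bar>n\<bar>"
  have nE: "phi m n y \<notin> E12" using bound h by force
  have S: "phi m n y \<in> S1" using y by (simp add: phi_norm)
  have "c (a1 * phi m n y) = c (phi m n y)" using nE S by (auto simp: Ec_def)
  then show "(c (phi (m + 1) n y) = R) = (c (phi m n y) = R)" by (simp add: phi_succ1)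
  have "c (a2 * phi m n y) = c (phi m n y)" using nE S by (auto simp: Ec_def)
  then show "(c (phi m (n + 1) y) = R) = (c (phi m n y) = R)" by (simp add: phi_succ2)
qed

lemma dich:
  assumes y: "y \<in> S1"
  shows "finite (Orb y - Aset) \<or> finite (Orb y \<inter> Aset)"
proof -
  have y0: "y \<noteq> 0" using y by auto
  define Idx where "Idx = (\<lambda>(m, n). phi m n y) -` E12"
  have fI: "finite Idx" unfolding Idx_def using fE1 fE2 phi_inj2[OF y0] by (simp add: finite_vimageI)
  define M where "M = Max (insert 0 ((\<lambda>(m, n). max \<bar>m\<bar> \<bar>n\<bar>) ` Idx))"
  have bound: "\<And>m n. phi m n y \<in> E12 \<Longrightarrow> \<bar>m\<bar> \<le> M \<and> \<bar>n\<bar> \<le> M"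
  proof -
    fix m n assume "phi m n y \<in> E12"
    then have "(m, n) \<in> Idx" by (simp add: Idx_def)
    then have "max \<bar>m\<bar> \<bar>n\<bar> \<le> M" unfolding M_def using fI
      by (intro Max_ge) (auto intro: rev_image_eqI)
    then show "\<bar>m\<bar> \<le> M \<and> \<bar>n\<bar> \<le> M" by simp
  qed
  define v where "v = (c (phi (M + 1) (M + 1) y) = R)"
  define Bx where "Bx = (\<lambda>(m, n). phi m n y) ` ({-M..M} \<times> {-M..M})"
  have fB: "finite Bx" by (simp add: Bx_def)
  have out: "\<And>m n. phi m n y \<notin> Bx \<Longrightarrow> (c (phi m n y) = R) = v"
  proof -
    fix m n assume "phi m n y \<notin> Bx"
    then have "M < \<bar>m\<bar> \<or> M < \<bar>n\<bar>" unfolding Bx_def by (force simp: abs_le_iff)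
    then show "(c (phi m n y) = R) = v" unfolding v_def using box[OF y bound] by blast
  qed
  show ?thesis
  proof (cases v)
    case True
    have "Orb y - Aset \<subseteq> Bx" using out True by (auto simp: Orb_def Aset_def)
    then show ?thesis using fB finite_subset by blast
  next
    case False
    have "Orb y \<inter> Aset \<subseteq> Bx" using out False by (auto simp: Orb_def Aset_def)
    then show ?thesis using fB finite_subset by blast
  qed
qed

lemma nodefect:
  assumes y: "y \<in> S1" and nd: "Orb y \<inter> E12 = {}"
  shows "Orb y \<subseteq> Aset \<or> Orb y \<inter> Aset = {}"
proof -
  have bound: "\<And>m n. phi m n y \<in> E12 \<Longrightarrow> \<bar>m\<bar> \<le> -1 \<and> \<bar>n\<bar> \<le> -1"
    using nd by (auto simp: Orb_def)
  have all: "(c (phi m n y) = R) = (c (phi 0 0 y) = R)" for m n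
  proof -
    have "-1 < \<bar>m\<bar>" by arith
    then have "(c (phi m n y) = R) = (c (phi (-1 + 1) (-1 + 1) y) = R)" using box[OF y bound, of m n] by blast
    then show ?thesis by simp
  qed
  show ?thesis
  proof (cases "c y = R")
    case True
    then have "Orb y \<subseteq> Aset" using all by (auto simp: Orb_def Aset_def phi_0)
    then show ?thesis ..
  next
    case False
    then have "Orb y \<inter> Aset = {}" using all by (auto simp: Orb_def Aset_def phi_0)
    then show ?thesis ..
  qed
qed

lemma U_orb: "y \<in> S1 \<Longrightarrow> w \<in> Orb y \<Longrightarrow> (w \<in> U) = (y \<in> U)"
  using orb_eq orb_S1 by (auto simp: U_def)

lemma Dd_finite: "finite Dd"
proof -
  have cover: "Dd \<subseteq> (\<Union>e\<in>E12. Orb e \<inter> Dd)"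
  proof
    fix y assume yD: "y \<in> Dd"
    then have y: "y \<in> S1" by (simp add: Dd_def)
    have "Orb y \<inter> E12 \<noteq> {}"
    proof
      assume nd: "Orb y \<inter> E12 = {}"
      have "y \<noteq> 0" using y by auto
      then have inf: "infinite (Orb y)" by (rule orb_inf)
      from nodefect[OF y nd] show False
      proof
        assume h: "Orb y \<subseteq> Aset"
        then have "Orb y - Aset = {}" by blast
        then have "finite (Orb y - Aset)" by (metis finite.emptyI)
        then have "y \<in> U" using y unfolding U_def by blast
        moreover have "c y = R" using h orb_self by (auto simp: Aset_def)
        ultimately show False using yD by (simp add: Dd_def)
      next
        assume h: "Orb y \<inter> Aset = {}"
        then have "Orb y - Aset = Orb y" by blast
        then have "y \<notin> U" using inf by (simp add: U_def)
        moreover have "c y \<noteq> R" using h orb_self by (auto simp: Aset_def)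
        ultimately show False using yD by (simp add: Dd_def)
      qed
    qed
    then obtain e where e: "e \<in> Orb y" "e \<in> E12" by blast
    have "y \<in> Orb e" using orb_eq[OF e(1)] orb_self by simp
    then show "y \<in> (\<Union>e\<in>E12. Orb e \<inter> Dd)" using e yD by blast
  qed
  have "finite (Orb e \<inter> Dd)" if e: "e \<in> E12" for e
  proof -
    have eS: "e \<in> S1" using e by (auto simp: Ec_def)
    show ?thesis
    proof (cases "e \<in> U")
      case True
      have "Orb e \<inter> Dd \<subseteq> Orb e - Aset"
        using U_orb[OF eS] True by (auto simp: Dd_def Aset_def)
      moreover have "finite (Orb e - Aset)" using True by (simp add: U_def)
      ultimately show ?thesis using finite_subset by blast
    next
      case False
      have "infinite (Orb e - Aset)" using False eS by (simp add: U_def)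
      then have "finite (Orb e \<inter> Aset)" using dich[OF eS] by blast
      moreover have "Orb e \<inter> Dd \<subseteq> Orb e \<inter> Aset"
        using U_orb[OF eS] False by (auto simp: Dd_def Aset_def)
      ultimately show ?thesis using finite_subset by blast
    qed
  qed
  then have "finite (\<Union>e\<in>E12. Orb e \<inter> Dd)" using fE1 fE2 by blast
  then show ?thesis using cover finite_subset by blast
qed

lemma U_inv:
  assumes g: "g \<in> O2" and fg: "finite (Ec c g)" and w: "w \<in> S1"
  shows "(g w \<in> U) = (w \<in> U)"
proof -
  have gw: "g w \<in> S1" using O2_S1[OF g w] .
  have "Orb (g w) - Aset = g ` {x\<in>Orb w. c (g x) \<noteq> R}"
    using orb_map[OF g] by (auto simp: Aset_def)
  then have "finite (Orb (g w) - Aset) = finite {x\<in>Orb w. c (g x) \<noteq> R}"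
    using O2_inj[OF g] by (simp add: finite_image_iff inj_on_subset)
  also have "\<dots> = finite (Orb w - Aset)"
  proof -
    have s1: "{x\<in>Orb w. c (g x) \<noteq> R} \<subseteq> (Orb w - Aset) \<union> Ec c g"
      using orb_S1[OF w] by (auto simp: Ec_def Aset_def)
    have s2: "Orb w - Aset \<subseteq> {x\<in>Orb w. c (g x) \<noteq> R} \<union> Ec c g"
      using orb_S1[OF w] by (auto simp: Ec_def Aset_def)
    show ?thesis using s1 s2 fg finite_subset by (metis finite_Un)
  qed
  finally show ?thesis using w gw by (simp add: U_def)
qed

lemma key_equiv:
  assumes v: "v \<in> S1" and disj: "F \<inter> Dd = {}"
  shows "(v \<in> Dd \<union> F) = ((modc c F v = R) \<noteq> (v \<in> U))"
proof (cases "v \<in> F")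
  case True
  then have "v \<notin> Dd" using disj by blast
  then have "(c v = R) = (v \<in> U)" using v by (simp add: Dd_def)
  then show ?thesis using True by (cases "c v") (auto simp: modc_def)
next
  case False
  then show ?thesis using v by (simp add: modc_def Dd_def)
qed

lemma case2:
  shows "\<exists>c'. distinguishing c' \<and> finite {w\<in>S1. c w \<noteq> c' w} \<and> card {w\<in>S1. c w \<noteq> c' w} \<le> 3"
proof -
  have fD: "finite Dd" by (rule Dd_finite)
  have DS: "Dd \<subseteq> S1" by (auto simp: Dd_def)
  obtain x y z where H: "x \<in> S1 \<and> y \<in> S1 \<and> z \<in> S1 \<and> x \<notin> Dd \<and> y \<notin> Dd \<and> z \<notin> Dd \<and>
     x \<notin> Dd \<and> y \<notin> Dd \<and> z \<notin> Dd \<and> x \<noteq> y \<and> y \<noteq> z \<and> x \<noteq> z \<and> y \<noteq> - x \<and>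
     uniq (Dd \<union> {x,y,z}) x y \<and> uniq (Dd \<union> {x,y,z}) y z \<and> uniq (Dd \<union> {x,y,z}) x z"
    using choose3[OF countable_finite[OF fD] fD DS] by (elim exE) (rule that)
  have xyz: "x \<in> S1" "y \<in> S1" "z \<in> S1" "x \<notin> Dd" "y \<notin> Dd" "z \<notin> Dd"
     "x \<noteq> y" "y \<noteq> z" "x \<noteq> z" "y \<noteq> - x"
     "uniq (Dd \<union> {x,y,z}) x y" "uniq (Dd \<union> {x,y,z}) y z" "uniq (Dd \<union> {x,y,z}) x z"
    using H by blast+
  have disj: "{x,y,z} \<inter> Dd = {}" using xyz by blast
  show ?thesis
  proof (rule finish[OF xyz DS])
    fix g assume g: "g \<in> O2" and s: "\<forall>w\<in>S1. modc c {x,y,z} (g w) = modc c {x,y,z} w"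
    have fg: "finite (Ec c g)" using sym_finite[OF g s] by simp
    show "\<forall>w\<in>S1. (g w \<in> Dd \<union> {x,y,z}) = (w \<in> Dd \<union> {x,y,z})"
    proof
      fix w assume w: "w \<in> S1"
      have gw: "g w \<in> S1" using O2_S1[OF g w] .
      show "(g w \<in> Dd \<union> {x,y,z}) = (w \<in> Dd \<union> {x,y,z})"
        using key_equiv[OF w disj] key_equiv[OF gw disj] U_inv[OF g fg w] s w by simp
    qed
  qed
qed

end

theorem corollary2p5p1:
  fixes c :: "complex \<Rightarrow> color"
  shows "\<exists>c'. distinguishing c' \<and> finite {x\<in>S1. c x \<noteq> c' x} \<and> card {x\<in>S1. c x \<noteq> c' x} \<le> 3"
proof (cases "countable (Hrot c) \<and> countable (Hrefl c)")
  case True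
  then have "countable (Hrot c)" "countable (Hrefl c)" by blast+
  then show ?thesis by (rule case1)
next
  case False
  then have "uncountable (Hrot c)" by (rule Hrot_uncountable)
  from indep_pair[OF this] obtain a1 a2 where a1: "a1 \<in> Hrot c" and a2: "a2 \<in> Hrot c"
    and rest: "a1 \<noteq> 0 \<and> a2 \<noteq> 0 \<and> (\<forall>m n. a1 powi m * a2 powi n = (1::complex) \<longrightarrow> m = 0 \<and> n = 0)"
    by (elim bexE) (rule that)
  from rest have ind: "\<forall>m n. a1 powi m * a2 powi n = (1::complex) \<longrightarrow> m = 0 \<and> n = 0" by (elim conjE)
  interpret orb c a1 a2 by (rule orb.intro[OF a1 a2 ind])
  show ?thesis by (rule case2)
qed


end
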